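(* Let $\mathcal{X}\subseteq\mathbb{R}^m$ be countable and let $\widehat\nu = \sum_{j=1}^N\widehat\nu_j\delta_{\widehat x_j}$ be a probability mass function supported on $N$ distinct points $\widehat x_1,\dots,\widehat x_N\in\mathcal{X}$ with $\widehat\nu_j>0$ and $\sum_j\widehat\nu_j = 1$. Let $f:\mathbb{R}\to\mathbb{R}$ be convex with $f(1)=0$, and for $\varepsilon\ge0$ let $\mathbb{B}_f(\widehat\nu,\varepsilon) = \{\nu\in\mathcal{M}(\mathcal{X}) : D_f(\widehat\nu\parallel\nu)\le\varepsilon\}$. Then for any $\varepsilon\ge0$ and $x\in\mathcal{X}$ there exists $\nu^\star_f\in\mathbb{B}_f(\widehat\nu,\varepsilon)$ with $\sup_{\nu\in\mathbb{B}_f(\widehat\nu,\varepsilon)}\nu(x) = \nu^\star_f(x)$. Moreover, $\nu^\star_f$ is supported on at most $N+1$ points and $\mathrm{supp}(\nu^\star_f)\subseteq\mathrm{supp}(\widehat\nu)\cup\{x\}$.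
   Context: $\mathcal{M}(\mathcal{X})$ is the set of probability mass functions on $\mathcal{X}$. The $f$-divergence between $\nu_1,\nu_2\in\mathcal{M}(\mathcal{X})$ is $D_f(\nu_1\parallel\nu_2) = \sum_{z\in\mathcal{X}} f(\nu_1(z)/\nu_2(z))\,\nu_2(z)$. *)

theory Defs
  imports "HOL-Probability.Probability"
begin

text \<open>Recession constant of f: f'(\<infinity>) = sup over t > 0 of (f t - f 0)/t
  (= lim f(t)/t as t goes to infinity for convex f); may be +\<infinity>.\<close>
definition frec :: "(real \<Rightarrow> real) \<Rightarrow> ereal" where
  "frec f = (SUP t\<in>{0<..}. ereal ((f t - f 0) / t))"

text \<open>Perspective term b * f(a/b) with the usual conventions:
  0 * f(0/0) = 0 and 0 * f(a/0) = a * f'(\<infinity>) for a > 0.\<close>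
definition fterm :: "(real \<Rightarrow> real) \<Rightarrow> real \<Rightarrow> real \<Rightarrow> ereal" where
  "fterm f a b = (if b > 0 then ereal (b * f (a / b))
                  else if a = 0 then 0 else ereal a * frec f)"

definition fdiv :: "(real \<Rightarrow> real) \<Rightarrow> 'a set \<Rightarrow> 'a pmf \<Rightarrow> 'a pmf \<Rightarrow> ereal" where
  "fdiv f X nu1 nu2 = (\<Sum>\<^sub>\<infinity>z\<in>X. fterm f (pmf nu1 z) (pmf nu2 z))"

definition fball :: "(real \<Rightarrow> real) \<Rightarrow> 'a set \<Rightarrow> 'a pmf \<Rightarrow> real \<Rightarrow> 'a pmf set" where
  "fball f X nuhat eps = {nu. set_pmf nu \<subseteq> X \<and> fdiv f X nuhat nu \<le> ereal eps}"

end

theory Submission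
  imports Defs
begin

lemma has_sum_ereal_fin_plus:
  fixes h :: "'a \<Rightarrow> ereal"
  assumes F: "finite F" and disj: "F \<inter> B = {}" and hs: "(h has_sum T) B" and T: "\<bar>T\<bar> \<noteq> \<infinity>"
  shows "(h has_sum (sum h F + T)) (F \<union> B)"
proof -
  have lim1: "((\<lambda>G. sum h (G \<inter> B)) \<longlongrightarrow> T) (finite_subsets_at_top (F \<union> B))"
  proof -
    have fl: "filterlim (\<lambda>G. G \<inter> B) (finite_subsets_at_top B) (finite_subsets_at_top (F \<union> B))"
      unfolding filterlim_finite_subsets_at_top
    proof (intro allI impI)
      fix Y assume "finite Y \<and> Y \<subseteq> B"
      then show "\<forall>\<^sub>F y in finite_subsets_at_top (F \<union> B). finite (y \<inter> B) \<and> Y \<subseteq> y \<inter> B \<and> y \<inter> B \<subseteq> B"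
        unfolding eventually_finite_subsets_at_top
        by (intro exI[of _ Y]) auto
    qed
    have hsT: "(sum h \<longlongrightarrow> T) (finite_subsets_at_top B)" using hs unfolding has_sum_def .
    show ?thesis by (rule filterlim_compose[OF hsT fl])
  qed
  have lim2: "((\<lambda>G. sum h F + sum h (G \<inter> B)) \<longlongrightarrow> sum h F + T) (finite_subsets_at_top (F \<union> B))"
    by (rule tendsto_add_ereal_general1[OF T tendsto_const lim1])
  have ev: "\<forall>\<^sub>F G in finite_subsets_at_top (F \<union> B). sum h F + sum h (G \<inter> B) = sum h G"
    unfolding eventually_finite_subsets_at_top
  proof (intro exI[of _ F] conjI allI impI)
    fix Y assume Y: "finite Y \<and> F \<subseteq> Y \<and> Y \<subseteq> F \<union> B"
    then have e: "Y = F \<union> (Y \<inter> B)" by auto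
    have d: "F \<inter> (Y \<inter> B) = {}" using disj by auto
    have "sum h Y = sum h (F \<union> (Y \<inter> B))" using e by (rule arg_cong)
    also have "\<dots> = sum h F + sum h (Y \<inter> B)"
      by (rule sum.union_disjoint[OF F _ d]) (use Y in auto)
    finally show "sum h F + sum h (Y \<inter> B) = sum h Y" by (rule sym)
  qed (use F in auto)
  have "((\<lambda>G. sum h F + sum h (G \<inter> B)) \<longlongrightarrow> sum h F + T) (finite_subsets_at_top (F \<union> B))
     = (sum h \<longlongrightarrow> sum h F + T) (finite_subsets_at_top (F \<union> B))"
    by (rule tendsto_cong[OF ev])
  then show ?thesis unfolding has_sum_def using lim2 by (rule iffD1)
qed

lemma has_sum_ereal_of_real:
  fixes g :: "'a \<Rightarrow> real"
  assumes "(g has_sum T) B"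
  shows "((\<lambda>z. ereal (g z)) has_sum ereal T) B"
proof -
  have "((ereal \<circ> g) has_sum ereal T) B"
  proof (rule has_sum_comm_additive_general[OF _ _ assms])
    show "sum (ereal \<circ> g) F = ereal (sum g F)" for F by (simp add: o_def)
    show "ereal \<midarrow>T\<rightarrow> ereal T" by (rule tendsto_ereal[OF tendsto_ident_at])
  qed
  then show ?thesis by (simp add: o_def)
qed

lemma pmf_summable_on: "pmf p summable_on A"
  by (rule abs_summable_summable) (subst abs_summable_equivalent, rule pmf_abs_summable)

lemma pmf_infsum_measure: "infsum (pmf p) A = measure_pmf.prob p A"
  using infsetsum_infsum[OF pmf_abs_summable[of p A]] measure_pmf_conv_infsetsum by metis

lemma frec_ge: "t > 0 \<Longrightarrow> ereal ((f t - f 0) / t) \<le> frec f"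
  unfolding frec_def by (rule SUP_upper) auto

lemma frec_ne_minf: "frec f \<noteq> -\<infinity>"
  using frec_ge[of 1 f] by auto

lemma frec_cases: obtains "frec f = \<infinity>" | K where "frec f = ereal K"
  using frec_ne_minf[of f] by (cases "frec f") auto

lemma frec_real_bound:
  assumes "frec f = ereal K" "t > 0" shows "f t \<le> f 0 + K * t"
proof -
  have "(f t - f 0) / t \<le> K" using frec_ge[of t f] assms by simp
  then show ?thesis using assms(2) by (simp add: divide_le_eq algebra_simps)
qed

lemma slope_le_K:
  assumes cv: "convex_on UNIV f" and K: "frec f = ereal K" and s: "s \<ge> 0" and d: "d > 0"
  shows "f (s + d) - f s \<le> d * K"
proof (rule ccontr)
  assume "\<not> ?thesis"
  then have gt: "(f (s + d) - f s) / d > K" using d by (simp add: field_simps)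
  define \<sigma> where "\<sigma> = (f (s + d) - f s) / d"
  define T where "T = max (s + d + 1) ((f 0 - f s + \<sigma> * s) / (\<sigma> - K) + 1)"
  have T1: "T > s + d" unfolding T_def by auto
  have T2: "T > (f 0 - f s + \<sigma> * s) / (\<sigma> - K)" unfolding T_def by auto
  have "(f s - f (s + d)) / (s - (s + d)) \<le> (f s - f T) / (s - T)"
    by (rule convex_on_slope_le(1)[OF cv]) (use d T1 in auto)
  moreover have "(f s - f (s + d)) / (s - (s + d)) = \<sigma>"
    unfolding \<sigma>_def using minus_divide_divide[of "f (s + d) - f s" d] by simp
  moreover have "(f s - f T) / (s - T) = (f T - f s) / (T - s)"
    using minus_divide_divide[of "f T - f s" "T - s"] by simp
  ultimately have "\<sigma> \<le> (f T - f s) / (T - s)" by simp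
  then have "\<sigma> * (T - s) \<le> f T - f s" using T1 d by (simp add: le_divide_eq)
  also have "f T \<le> f 0 + K * T" using frec_real_bound[OF K] T1 s d by auto
  finally have "(\<sigma> - K) * T \<le> f 0 - f s + \<sigma> * s" by (simp add: algebra_simps)
  moreover have "\<sigma> - K > 0" using gt \<sigma>_def by simp
  ultimately have "T \<le> (f 0 - f s + \<sigma> * s) / (\<sigma> - K)" by (simp add: le_divide_eq mult.commute)
  then show False using T2 by simp
qed

lemma fterm_pos: "b > 0 \<Longrightarrow> fterm f a b = ereal (b * f (a / b))"
  by (simp add: fterm_def)

lemma fterm_zero_left: "b \<ge> 0 \<Longrightarrow> fterm f 0 b = ereal (b * f 0)"
  by (auto simp: fterm_def)

lemma fterm_zero_right: "a \<ge> 0 \<Longrightarrow> fterm f a 0 = ereal a * frec f"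
  by (auto simp: fterm_def zero_ereal_def[symmetric])

lemma fterm_diag: "a \<ge> 0 \<Longrightarrow> f 1 = 0 \<Longrightarrow> fterm f a a = 0"
  by (auto simp: fterm_def)

lemma fterm_ne_minf: "a \<ge> 0 \<Longrightarrow> fterm f a b \<noteq> -\<infinity>"
  using frec_ne_minf[of f] by (cases "frec f") (auto simp: fterm_def)

lemma fterm_subadd:
  assumes cv: "convex_on UNIV f" and a1: "a1 \<ge> 0" and a2: "a2 \<ge> 0" and b1: "b1 \<ge> 0" and b2: "b2 \<ge> 0"
  shows "fterm f (a1 + a2) (b1 + b2) \<le> fterm f a1 b1 + fterm f a2 b2"
proof -
  have both: "(b1 + b2) * f ((a1 + a2) / (b1 + b2)) \<le> b1 * f (a1 / b1) + b2 * f (a2 / b2)"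
    if p1: "b1 > 0" and p2: "b2 > 0"
  proof -
    define l where "l = b2 / (b1 + b2)"
    have l0: "0 \<le> l" "l \<le> 1" using p1 p2 by (auto simp: l_def)
    have c1: "(b1 + b2) * (1 - l) = b1" and c2: "(b1 + b2) * l = b2"
      using p1 p2 by (auto simp: l_def field_simps)
    have "1 - l = b1 / (b1 + b2)" using p1 p2 by (simp add: l_def field_simps)
    then have "(1 - l) * (a1 / b1) = a1 / (b1 + b2)"
      using p1 p2 by simp
    moreover have "l * (a2 / b2) = a2 / (b1 + b2)"
      using p1 p2 by (simp add: l_def)
    ultimately have eq: "(a1 + a2) / (b1 + b2) = (1 - l) * (a1 / b1) + l * (a2 / b2)"
      by (simp add: add_divide_distrib)
    have "f ((1 - l) *\<^sub>R (a1 / b1) + l *\<^sub>R (a2 / b2)) \<le> (1 - l) * f (a1 / b1) + l * f (a2 / b2)"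
      by (rule convex_onD[OF cv]) (use l0 in auto)
    then have "f ((a1 + a2) / (b1 + b2)) \<le> (1 - l) * f (a1 / b1) + l * f (a2 / b2)"
      using eq by simp
    then have "(b1 + b2) * f ((a1 + a2) / (b1 + b2)) \<le> (b1 + b2) * ((1 - l) * f (a1 / b1) + l * f (a2 / b2))"
      using p1 p2 by (simp add: mult_left_mono)
    also have "\<dots> = b1 * f (a1 / b1) + b2 * f (a2 / b2)"
      by (simp only: distrib_left mult.assoc[symmetric] c1 c2)
    finally show ?thesis .
  qed
  have one: "b2 * f ((a1 + a2) / b2) \<le> a1 * K + b2 * f (a2 / b2)"
    if K: "frec f = ereal K" and p2: "b2 > 0" and a1: "a1 > 0" and a2: "a2 \<ge> 0" for a1 a2 b2 K :: real
  proof -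
    have "f (a2 / b2 + a1 / b2) - f (a2 / b2) \<le> a1 / b2 * K"
      by (rule slope_le_K[OF cv K]) (use p2 a1 a2 in simp_all)
    moreover have "(a1 + a2) / b2 = a2 / b2 + a1 / b2" by (simp add: add_divide_distrib)
    ultimately have "f ((a1 + a2) / b2) - f (a2 / b2) \<le> a1 / b2 * K" by simp
    then have "f ((a1 + a2) / b2) - f (a2 / b2) \<le> (a1 * K) / b2" by simp
    then have "(f ((a1 + a2) / b2) - f (a2 / b2)) * b2 \<le> a1 * K"
      using p2 by (simp add: le_divide_eq)
    then show ?thesis using p2 by (simp add: algebra_simps)
  qed
  show ?thesis
  proof (cases rule: frec_cases[of f])
    case 1
    show ?thesis
    proof (cases "(b1 = 0 \<and> a1 > 0) \<or> (b2 = 0 \<and> a2 > 0)")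
      case True
      then have "fterm f a1 b1 = \<infinity> \<or> fterm f a2 b2 = \<infinity>"
        using 1 by (auto simp: fterm_def)
      then have inf: "fterm f a1 b1 + fterm f a2 b2 = \<infinity>"
        using fterm_ne_minf[OF a1, of f b1] fterm_ne_minf[OF a2, of f b2]
        by (cases "fterm f a1 b1"; cases "fterm f a2 b2") auto
      show ?thesis unfolding inf by simp
    next
      case False
      then have z1: "b1 = 0 \<Longrightarrow> a1 = 0" and z2: "b2 = 0 \<Longrightarrow> a2 = 0" using a1 a2 by auto
      show ?thesis
      proof (cases "b1 > 0")
        case p1: True
        show ?thesis
        proof (cases "b2 > 0")
          case True
          then show ?thesis using both[OF p1 True] p1 by (simp add: fterm_pos)
        next
          case False
          then have "b2 = 0" "a2 = 0" using b2 z2 by auto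
          then show ?thesis by (simp add: fterm_def)
        qed
      next
        case False
        then have "b1 = 0" "a1 = 0" using b1 z1 by auto
        then show ?thesis by (simp add: fterm_def)
      qed
    qed
  next
    case (2 K)
    define ft where "ft a b = (if b > 0 then b * f (a / b) else a * K)" for a b
    have ftE: "fterm f a b = ereal (ft a b)" if "a \<ge> 0" "b \<ge> 0" for a b
      using that 2 by (auto simp: fterm_def ft_def)
    have "ft (a1 + a2) (b1 + b2) \<le> ft a1 b1 + ft a2 b2"
    proof (cases "b1 > 0")
      case p1: True
      show ?thesis
      proof (cases "b2 > 0")
        case True
        then show ?thesis using both[OF p1 True] p1 by (simp add: ft_def)
      next
        case False
        then have "b2 = 0" using b2 by auto
        then show ?thesis
        proof (cases "a2 = 0")
          case True then show ?thesis using \<open>b2 = 0\<close> p1 by (simp add: ft_def)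
        next
          case False
          then have "b1 * f ((a2 + a1) / b1) \<le> a2 * K + b1 * f (a1 / b1)"
            using one[OF 2 p1, of a2 a1] a1 a2 by simp
          then show ?thesis using \<open>b2 = 0\<close> p1 by (simp add: ft_def add.commute)
        qed
      qed
    next
      case False
      then have "b1 = 0" using b1 by auto
      show ?thesis
      proof (cases "b2 > 0")
        case p2: True
        show ?thesis
        proof (cases "a1 = 0")
          case True then show ?thesis using \<open>b1 = 0\<close> p2 by (simp add: ft_def)
        next
          case False
          then have "b2 * f ((a1 + a2) / b2) \<le> a1 * K + b2 * f (a2 / b2)"
            using one[OF 2 p2, of a1 a2] a1 a2 by simp
          then show ?thesis using \<open>b1 = 0\<close> p2 by (simp add: ft_def)
        qed
      next
        case False
        then have "b2 = 0" using b2 by auto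
        then show ?thesis using \<open>b1 = 0\<close> by (simp add: ft_def algebra_simps)
      qed
    qed
    then show ?thesis using a1 a2 b1 b2 by (simp add: ftE)
  qed
qed

lemma fterm_sum:
  assumes cv: "convex_on UNIV f" and fin: "finite I"
    and a: "\<And>i. i \<in> I \<Longrightarrow> a i \<ge> 0" and b: "\<And>i. i \<in> I \<Longrightarrow> b i \<ge> 0"
  shows "fterm f (\<Sum>i\<in>I. a i) (\<Sum>i\<in>I. b i) \<le> (\<Sum>i\<in>I. fterm f (a i) (b i))"
  using fin a b
proof (induction I rule: finite_induct)
  case empty
  then show ?case by (simp add: fterm_def)
next
  case (insert i I)
  have "fterm f (\<Sum>i\<in>insert i I. a i) (\<Sum>i\<in>insert i I. b i)
      = fterm f (a i + (\<Sum>i\<in>I. a i)) (b i + (\<Sum>i\<in>I. b i))" using insert by simp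
  also have "\<dots> \<le> fterm f (a i) (b i) + fterm f (\<Sum>i\<in>I. a i) (\<Sum>i\<in>I. b i)"
    by (rule fterm_subadd[OF cv]) (use insert in \<open>auto intro: sum_nonneg\<close>)
  also have "\<dots> \<le> fterm f (a i) (b i) + (\<Sum>i\<in>I. fterm f (a i) (b i))"
    by (rule add_left_mono) (use insert in auto)
  also have "\<dots> = (\<Sum>i\<in>insert i I. fterm f (a i) (b i))" using insert by simp
  finally show ?case .
qed

lemma pmf_total:
  fixes nu :: "'a pmf"
  assumes fin: "finite S'" and sub: "S' \<subseteq> X" and nuX: "set_pmf nu \<subseteq> X"
  shows "(\<Sum>z\<in>S'. pmf nu z) + infsum (pmf nu) (X - S') = 1"
proof -
  have "measure_pmf.prob nu X = 1"
    using nuX by (subst measure_pmf.prob_eq_1) (auto simp: AE_measure_pmf_iff)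
  moreover have "measure_pmf.prob nu X = measure_pmf.prob nu S' + measure_pmf.prob nu (X - S')"
  proof -
    have "X = S' \<union> (X - S')" using sub by auto
    then have "measure_pmf.prob nu X = measure_pmf.prob nu (S' \<union> (X - S'))" by (rule arg_cong)
    also have "\<dots> = measure_pmf.prob nu S' + measure_pmf.prob nu (X - S')"
      by (rule measure_pmf.finite_measure_Union) auto
    finally show ?thesis .
  qed
  ultimately show ?thesis
    using measure_measure_pmf_finite[OF fin, of nu] pmf_infsum_measure[of nu "X - S'"] by simp
qed

lemma fdiv_lower:
  fixes nuhat nu :: "'a pmf"
  assumes cv: "convex_on UNIV f" and fin: "finite S'" and hatS: "set_pmf nuhat \<subseteq> S'"
    and xS: "x \<in> S'" and sub: "S' \<subseteq> X" and nuX: "set_pmf nu \<subseteq> X"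
  shows "fterm f (pmf nuhat x) (pmf nu x) + fterm f (1 - pmf nuhat x) (1 - pmf nu x) \<le> fdiv f X nuhat nu"
proof -
  define B where "B = X - S'"
  define R where "R = infsum (pmf nu) B"
  define h where "h z = fterm f (pmf nuhat z) (pmf nu z)" for z
  have R0: "R \<ge> 0" unfolding R_def by (rule infsum_nonneg) auto
  have hB: "h z = ereal (pmf nu z * f 0)" if "z \<in> B" for z
  proof -
    have "z \<notin> set_pmf nuhat" using that hatS B_def by auto
    then have "pmf nuhat z = 0" by (simp add: set_pmf_iff)
    then show ?thesis unfolding h_def by (simp add: fterm_zero_left)
  qed
  have "(pmf nu has_sum R) B" unfolding R_def by (rule has_sum_infsum[OF pmf_summable_on])
  then have "((\<lambda>z. pmf nu z * f 0) has_sum (R * f 0)) B" by (rule has_sum_cmult_left)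
  then have "((\<lambda>z. ereal (pmf nu z * f 0)) has_sum ereal (R * f 0)) B" by (rule has_sum_ereal_of_real)
  moreover have "(h has_sum ereal (R * f 0)) B \<longleftrightarrow> ((\<lambda>z. ereal (pmf nu z * f 0)) has_sum ereal (R * f 0)) B"
    by (rule has_sum_cong) (rule hB)
  ultimately have hsB: "(h has_sum ereal (R * f 0)) B" by (rule iffD2[rotated])
  have "(h has_sum (sum h S' + ereal (R * f 0))) (S' \<union> B)"
    by (rule has_sum_ereal_fin_plus[OF fin _ hsB]) (auto simp: B_def)
  moreover have "S' \<union> B = X" using sub B_def by auto
  ultimately have "(h has_sum (sum h S' + ereal (R * f 0))) X" by simp
  then have "infsum h X = sum h S' + ereal (R * f 0)" by (rule infsumI)
  moreover have "fdiv f X nuhat nu = infsum h X" unfolding fdiv_def h_def ..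
  ultimately have D: "fdiv f X nuhat nu = sum h S' + ereal (R * f 0)" by simp
  have sa: "(\<Sum>z\<in>S' - {x}. pmf nuhat z) = 1 - pmf nuhat x"
    using sum_pmf_eq_1[OF fin hatS] sum.remove[OF fin xS, of "pmf nuhat"] by simp
  have sb: "(\<Sum>z\<in>S' - {x}. pmf nu z) = 1 - pmf nu x - R"
    using pmf_total[OF fin sub nuX] sum.remove[OF fin xS, of "pmf nu"] unfolding R_def B_def by simp
  have sb0: "1 - pmf nu x - R \<ge> 0" using sb[symmetric] by (simp add: sum_nonneg)
  have q1: "1 - pmf nuhat x \<ge> 0" by (simp add: pmf_le_1)
  have e1: "fterm f (pmf nuhat x) (pmf nu x) + fterm f (1 - pmf nuhat x) (1 - pmf nu x)
     = h x + fterm f ((1 - pmf nuhat x) + 0) ((1 - pmf nu x - R) + R)" by (simp add: h_def)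
  have i1: "fterm f ((1 - pmf nuhat x) + 0) ((1 - pmf nu x - R) + R)
      \<le> fterm f (1 - pmf nuhat x) (1 - pmf nu x - R) + fterm f 0 R"
    by (rule fterm_subadd[OF cv q1 _ sb0 R0]) simp
  have i2: "fterm f (1 - pmf nuhat x) (1 - pmf nu x - R) \<le> sum h (S' - {x})"
    using fterm_sum[OF cv, of "S' - {x}" "pmf nuhat" "pmf nu"] fin sa sb unfolding h_def by simp
  have e2: "fterm f 0 R = ereal (R * f 0)" using R0 by (simp add: fterm_zero_left)
  have e3: "h x + (sum h (S' - {x}) + ereal (R * f 0)) = fdiv f X nuhat nu"
    unfolding D using sum.remove[OF fin xS, of h] by (simp add: add.assoc)
  have "fterm f ((1 - pmf nuhat x) + 0) ((1 - pmf nu x - R) + R) \<le> sum h (S' - {x}) + ereal (R * f 0)"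
    using order_trans[OF i1 add_right_mono[OF i2]] unfolding e2 .
  then show ?thesis unfolding e1 e3[symmetric] by (rule add_left_mono)
qed

definition nup :: "'a pmf \<Rightarrow> 'a \<Rightarrow> real \<Rightarrow> 'a pmf" where
  "nup nuhat x p = bind_pmf (bernoulli_pmf p) (\<lambda>b. if b then return_pmf x else cond_pmf nuhat (-{x}))"

lemma ne_lemma:
  assumes q: "pmf nuhat x < 1"
  shows "set_pmf nuhat \<inter> -{x} \<noteq> {}"
proof
  assume "set_pmf nuhat \<inter> -{x} = {}"
  then have "set_pmf nuhat \<subseteq> {x}" by auto
  then have "pmf nuhat x = 1" using sum_pmf_eq_1[of "{x}" nuhat] by simp
  then show False using q by simp
qed

lemma nup_pmf:
  assumes q: "pmf nuhat x < 1" and p0: "0 \<le> p" and p1: "p \<le> 1"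
  shows "pmf (nup nuhat x p) z = (if z = x then p else (1 - p) / (1 - pmf nuhat x) * pmf nuhat z)"
proof -
  have ne: "set_pmf nuhat \<inter> -{x} \<noteq> {}" by (rule ne_lemma[OF q])
  have m: "measure_pmf.prob nuhat (-{x}) = 1 - pmf nuhat x"
    using measure_pmf.prob_compl[of "{x}" nuhat] by (simp add: Compl_eq_Diff_UNIV measure_pmf_single)
  have "pmf (nup nuhat x p) z = pmf (return_pmf x) z * p + pmf (cond_pmf nuhat (-{x})) z * (1 - p)"
    unfolding nup_def pmf_bind using p0 p1 by simp
  also have "\<dots> = (if z = x then p else (1 - p) / (1 - pmf nuhat x) * pmf nuhat z)"
    using pmf_cond[OF ne, of z] m by auto
  finally show ?thesis .
qed

lemma nup_set:
  assumes q: "pmf nuhat x < 1"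
  shows "set_pmf (nup nuhat x p) \<subseteq> insert x (set_pmf nuhat)"
  unfolding nup_def set_bind_pmf
proof (rule UN_least)
  fix b :: bool
  show "set_pmf (if b then return_pmf x else cond_pmf nuhat (- {x})) \<subseteq> insert x (set_pmf nuhat)"
  proof (cases b)
    case True then show ?thesis by simp
  next
    case False
    have "set_pmf (cond_pmf nuhat (-{x})) = set_pmf nuhat \<inter> -{x}" by (rule set_cond_pmf[OF ne_lemma[OF q]])
    then show ?thesis using False by auto
  qed
qed

lemma fdiv_nup:
  fixes nuhat :: "'a pmf"
  assumes fin: "finite (set_pmf nuhat)" and sub: "insert x (set_pmf nuhat) \<subseteq> X"
    and q: "pmf nuhat x < 1" and p0: "0 \<le> p" and p1: "p \<le> 1"
  shows "fdiv f X nuhat (nup nuhat x p) = fterm f (pmf nuhat x) p + fterm f (1 - pmf nuhat x) (1 - p)"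
proof -
  define S' where "S' = insert x (set_pmf nuhat)"
  define a where "a z = pmf nuhat z" for z
  define c where "c = (1 - p) / (1 - pmf nuhat x)"
  define h where "h z = fterm f (pmf nuhat z) (pmf (nup nuhat x p) z)" for z
  have finS: "finite S'" using fin S'_def by simp
  have xS: "x \<in> S'" using S'_def by simp
  have c0: "c \<ge> 0" using q p1 by (simp add: c_def)
  have pz: "pmf (nup nuhat x p) z = c * a z" if "z \<noteq> x" for z
    using nup_pmf[OF q p0 p1, of z] that by (simp add: c_def a_def)
  have hs: "(h has_sum sum h S') X"
  proof (rule has_sum_finite_neutralI[OF finS])
    show "S' \<subseteq> X" using sub S'_def by simp
    show "h z = 0" if "z \<in> X - S'" for z
    proof -
      have "z \<notin> set_pmf nuhat" "z \<notin> set_pmf (nup nuhat x p)"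
        using that nup_set[OF q, of p] S'_def by auto
      then show ?thesis by (simp add: h_def set_pmf_iff fterm_def)
    qed
  qed simp
  have D: "fdiv f X nuhat (nup nuhat x p) = h x + sum h (S' - {x})"
  proof -
    have "fdiv f X nuhat (nup nuhat x p) = infsum h X" unfolding fdiv_def h_def ..
    also have "\<dots> = sum h S'" by (rule infsumI[OF hs])
    also have "\<dots> = h x + sum h (S' - {x})" by (rule sum.remove[OF finS xS])
    finally show ?thesis .
  qed
  have hx: "h x = fterm f (pmf nuhat x) p" using nup_pmf[OF q p0 p1, of x] by (simp add: h_def)
  have sa: "(\<Sum>z\<in>S' - {x}. a z) = 1 - pmf nuhat x"
  proof -
    have "set_pmf nuhat \<subseteq> S'" using S'_def by auto
    then have "sum (pmf nuhat) S' = 1" by (rule sum_pmf_eq_1[OF finS])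
    then show ?thesis using sum.remove[OF finS xS, of "pmf nuhat"] unfolding a_def by simp
  qed
  have a0: "a z \<ge> 0" for z by (simp add: a_def)
  have rest: "sum h (S' - {x}) = fterm f (1 - pmf nuhat x) (1 - p)"
  proof (cases "p < 1")
    case True
    then have cp: "c > 0" using q by (simp add: c_def)
    have hz: "h z = ereal (c * f (1 / c) * a z)" if "z \<in> S' - {x}" for z
    proof (cases "a z = 0")
      case True
      then show ?thesis using pz[of z] that by (simp add: h_def a_def fterm_def)
    next
      case False
      then have "a z > 0" using a0[of z] by simp
      then have "c * a z > 0" using cp by simp
      moreover have "a z / (c * a z) = 1 / c" using \<open>a z > 0\<close> by simp
      ultimately show ?thesis using pz[of z] that by (simp add: h_def a_def[symmetric] fterm_pos mult_ac)
    qed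
    have "sum h (S' - {x}) = (\<Sum>z\<in>S' - {x}. ereal (c * f (1 / c) * a z))"
      by (rule sum.cong) (simp_all add: hz)
    also have "\<dots> = ereal (c * f (1 / c) * (1 - pmf nuhat x))"
      by (simp add: sum_distrib_left[symmetric] sa)
    finally have s1: "sum h (S' - {x}) = ereal (c * f (1 / c) * (1 - pmf nuhat x))" .
    have e1: "c * (1 - pmf nuhat x) = 1 - p" using q by (simp add: c_def)
    have e2: "1 / c = (1 - pmf nuhat x) / (1 - p)" by (simp add: c_def)
    have "sum h (S' - {x}) = ereal ((1 - p) * f ((1 - pmf nuhat x) / (1 - p)))"
      unfolding s1 e2[symmetric] e1[symmetric] by (simp add: mult_ac)
    then show ?thesis using True by (simp add: fterm_pos)
  next
    case False
    then have "p = 1" using p1 by simp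
    then have c00: "c = 0" by (simp add: c_def)
    have hz: "h z = ereal (a z) * frec f" if "z \<in> S' - {x}" for z
      using pz[of z] that c00 fterm_zero_right[OF a0[of z], of f] by (simp add: h_def a_def)
    have "sum h (S' - {x}) = (\<Sum>z\<in>S' - {x}. ereal (a z) * frec f)"
      by (rule sum.cong) (simp_all add: hz)
    also have "\<dots> = (\<Sum>z\<in>S' - {x}. ereal (a z)) * frec f"
      by (rule sum_ereal_left_distrib[symmetric]) (simp add: a0)
    also have "\<dots> = ereal (1 - pmf nuhat x) * frec f" using sa by simp
    finally show ?thesis using \<open>p = 1\<close> fterm_zero_right[of "1 - pmf nuhat x" f] q by simp
  qed
  show ?thesis using D hx rest by simp
qed

lemma sup_approach:
  fixes A :: "real set"
  assumes "A \<noteq> {}" "bdd_above A" "Sup A \<notin> A" "\<delta> > 0"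
  obtains p where "p \<in> A" "Sup A - \<delta> < p" "p < Sup A"
proof -
  have "Sup A - \<delta> < Sup A" using assms by simp
  then obtain p where p: "p \<in> A" "Sup A - \<delta> < p" using less_cSup_iff[OF assms(1,2)] by blast
  moreover have "p \<le> Sup A" using cSup_upper[OF p(1) assms(2)] .
  moreover have "p \<noteq> Sup A" using p(1) assms(3) by auto
  ultimately show ?thesis using that by auto
qed

lemma convex_chord:
  assumes cv: "convex_on UNIV f" and t0: "0 < t0" "t0 \<le> t"
  shows "f t \<ge> f 0 + (f t0 - f 0) / t0 * t"
proof -
  have "(f t0 - f 0) / t0 \<le> (f t - f 0) / t"
  proof (cases "t0 = t")
    case False
    then have "t0 < t" using t0 by simp
    have "(f 0 - f t0) / (0 - t0) \<le> (f 0 - f t) / (0 - t)"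
      by (rule convex_on_slope_le(1)[OF cv]) (use t0 \<open>t0 < t\<close> in auto)
    moreover have "(f 0 - f t0) / (0 - t0) = (f t0 - f 0) / t0"
      using minus_divide_divide[of "f t0 - f 0" t0] by simp
    moreover have "(f 0 - f t) / (0 - t) = (f t - f 0) / t"
      using minus_divide_divide[of "f t - f 0" t] by simp
    ultimately show ?thesis by simp
  qed simp
  then have "(f t0 - f 0) / t0 * t \<le> (f t - f 0) / t * t"
    using t0 by (intro mult_right_mono) auto
  also have "\<dots> = f t - f 0" using t0 by simp
  finally show ?thesis by simp
qed

lemma opt_exists:
  fixes eps :: real
  assumes cv: "convex_on UNIV f" and f1: "f 1 = 0" and q0: "0 \<le> q" and q1: "q < 1" and e0: "eps \<ge> 0"
  defines "A \<equiv> {p. 0 \<le> p \<and> p \<le> 1 \<and> fterm f q p + fterm f (1 - q) (1 - p) \<le> ereal eps}"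
  shows "Sup A \<in> A"
proof (rule ccontr)
  assume nA: "Sup A \<notin> A"
  define g where "g p = fterm f q p + fterm f (1 - q) (1 - p)" for p
  define G where "G p = p * f (q / p) + (1 - p) * f ((1 - q) / (1 - p))" for p
  have gG: "g p = ereal (G p)" if "0 < p" "p < 1" for p
    using that by (simp add: g_def G_def fterm_pos)
  have qA: "q \<in> A" unfolding A_def using q0 q1 fterm_diag[of q f] fterm_diag[of "1 - q" f] f1 e0 by simp
  then have Ane: "A \<noteq> {}" by auto
  have bdd: "bdd_above A" unfolding A_def by (intro bdd_aboveI[of _ 1]) auto
  have sq: "q \<le> Sup A" by (rule cSup_upper[OF qA bdd])
  have s1: "Sup A \<le> 1" by (rule cSup_least[OF Ane]) (auto simp: A_def)
  have sneq: "Sup A \<noteq> q" using qA nA by auto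
  then have sq': "q < Sup A" using sq by simp
  have gs: "g (Sup A) > ereal eps" using nA s1 sq q0 unfolding A_def g_def by auto
  have contf: "isCont f y" for y
    using convex_on_continuous[OF open_UNIV cv] continuous_on_eq_continuous_at[OF open_UNIV] by blast
  have key: "\<exists>\<delta>>0. \<forall>p. Sup A - \<delta> < p \<and> p < Sup A \<longrightarrow> 0 < p \<and> p < 1 \<and> G p > eps"
  proof (cases "Sup A < 1")
    case True
    let ?s = "Sup A"
    have s0: "0 < ?s" using sq' q0 by simp
    have Gs: "G ?s > eps" using gs gG[OF s0 True] by simp
    have "isCont G ?s" unfolding G_def using s0 True
      by (intro continuous_intros isCont_o2[OF _ contf]) auto
    then have "(G \<longlongrightarrow> G ?s) (at ?s)" by (simp add: isCont_def)
    then have "eventually (\<lambda>p. G p > eps) (at ?s)" using Gs by (rule order_tendstoD(1))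
    then obtain d where d: "d > 0" "\<And>p. p \<noteq> ?s \<Longrightarrow> dist p ?s < d \<Longrightarrow> G p > eps"
      unfolding eventually_at by auto
    show ?thesis
    proof (intro exI[of _ "min d ?s"] conjI allI impI)
      fix p assume p: "?s - min d ?s < p \<and> p < ?s"
      show "0 < p" using p min.cobounded2[of d ?s] by linarith
      show "p < 1" using p True by simp
      show "G p > eps" using p min.cobounded1[of d ?s] by (intro d(2)) (auto simp: dist_real_def)
    qed (use d s0 in simp)
  next
    case False
    then have s1': "Sup A = 1" using s1 by simp
    have "g 1 = ereal (f q) + ereal (1 - q) * frec f"
      using q0 q1 by (simp add: g_def fterm_pos fterm_zero_right)
    then have g1: "ereal eps < ereal (f q) + ereal (1 - q) * frec f" using gs s1' by simp
    have "ereal ((eps - f q) / (1 - q)) < frec f"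
    proof (cases rule: frec_cases[of f])
      case 1 then show ?thesis by simp
    next
      case (2 K)
      then have "eps < f q + (1 - q) * K" using g1 by simp
      then have "(eps - f q) / (1 - q) < K" using q1 by (simp add: divide_less_eq mult.commute)
      then show ?thesis using 2 by simp
    qed
    then obtain t0 where t0: "t0 > 0" "(eps - f q) / (1 - q) < (f t0 - f 0) / t0"
      unfolding frec_def less_SUP_iff by auto
    define c where "c = (f t0 - f 0) / t0"
    define H where "H p = p * f (q / p) + (1 - p) * f 0 + (1 - q) * c" for p
    have H1: "H 1 > eps" using t0(2) q1 by (simp add: H_def c_def pos_divide_less_eq algebra_simps)
    have "isCont H 1" unfolding H_def
      by (intro continuous_intros isCont_o2[OF _ contf]) auto
    then have "(H \<longlongrightarrow> H 1) (at 1)" by (simp add: isCont_def)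
    then have "eventually (\<lambda>p. H p > eps) (at 1)" using H1 by (rule order_tendstoD(1))
    then obtain d where d: "d > 0" "\<And>p. p \<noteq> 1 \<Longrightarrow> dist p 1 < d \<Longrightarrow> H p > eps"
      unfolding eventually_at by auto
    define \<delta> where "\<delta> = min d (min 1 ((1 - q) / t0))"
    have \<delta>0: "\<delta> > 0" using d t0 q1 by (simp add: \<delta>_def)
    show ?thesis
    proof (intro exI[of _ \<delta>] conjI allI impI \<delta>0)
      fix p assume p: "Sup A - \<delta> < p \<and> p < Sup A"
      then have p1: "1 - \<delta> < p" "p < 1" using s1' by auto
      show p0: "0 < p" using p1 by (simp add: \<delta>_def)
      show "p < 1" by fact
      have "1 - p < (1 - q) / t0" using p1 by (simp add: \<delta>_def)
      then have tt: "t0 \<le> (1 - q) / (1 - p)" using p1 t0 q1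
        by (simp add: le_divide_eq pos_less_divide_eq mult.commute)
      have "f ((1 - q) / (1 - p)) \<ge> f 0 + c * ((1 - q) / (1 - p))"
        using convex_chord[OF cv t0(1) tt] by (simp add: c_def)
      then have "(1 - p) * f ((1 - q) / (1 - p)) \<ge> (1 - p) * (f 0 + c * ((1 - q) / (1 - p)))"
        using p1 by (intro mult_left_mono) auto
      also have "(1 - p) * (f 0 + c * ((1 - q) / (1 - p))) = (1 - p) * f 0 + (1 - q) * c"
        using p1 by (simp add: field_simps)
      finally have "G p \<ge> H p" by (simp add: G_def H_def)
      moreover have "H p > eps" using p1 by (intro d(2)) (auto simp: dist_real_def \<delta>_def)
      ultimately show "G p > eps" by simp
    qed
  qed
  then obtain \<delta> where \<delta>: "\<delta> > 0" "\<And>p. Sup A - \<delta> < p \<Longrightarrow> p < Sup A \<Longrightarrow> 0 < p \<and> p < 1 \<and> G p > eps"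
    by blast
  obtain p where p: "p \<in> A" "Sup A - \<delta> < p" "p < Sup A"
    by (rule sup_approach[OF Ane bdd nA \<delta>(1)])
  have "g p > ereal eps" using \<delta>(2)[OF p(2,3)] gG by simp
  moreover have "g p \<le> ereal eps" using p(1) unfolding A_def g_def by simp
  ultimately show False by simp
qed

lemma fdiv_self:
  assumes f1: "f 1 = 0"
  shows "fdiv f X nu nu = 0"
proof -
  have "fdiv f X nu nu = infsum (\<lambda>z. 0) X" unfolding fdiv_def
    by (rule infsum_cong) (simp add: fterm_diag f1)
  then show ?thesis by simp
qed

theorem mainTheorem11:
  fixes X :: "(real ^ 'm) set" and nuhat :: "(real ^ 'm) pmf"
    and f :: "real \<Rightarrow> real" and eps :: real and x :: "real ^ 'm"
  assumes "countable X"
    and "finite (set_pmf nuhat)" and "set_pmf nuhat \<subseteq> X"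
    and "convex_on UNIV f" and "f 1 = 0"
    and "eps \<ge> 0" and "x \<in> X"
  shows "\<exists>nustar. nustar \<in> fball f X nuhat eps
           \<and> (SUP nu\<in>fball f X nuhat eps. pmf nu x) = pmf nustar x
           \<and> card (set_pmf nustar) \<le> card (set_pmf nuhat) + 1
           \<and> set_pmf nustar \<subseteq> set_pmf nuhat \<union> {x}"
proof -
  note fin = assms(2) and hatX = assms(3) and cv = assms(4) and f1 = assms(5) and e0 = assms(6) and xX = assms(7)
  define q where "q = pmf nuhat x"
  show ?thesis
  proof (cases "q < 1")
    case False
    then have q1: "q = 1" using pmf_le_1[of nuhat x] q_def by simp
    have inB: "nuhat \<in> fball f X nuhat eps"
      unfolding fball_def using hatX fdiv_self[of f X nuhat] f1 e0 by simp
    have "(SUP nu\<in>fball f X nuhat eps. pmf nu x) = pmf nuhat x"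
      by (rule cSup_eq_maximum) (use inB q1 q_def pmf_le_1 in auto)
    then show ?thesis using inB by (intro exI[of _ nuhat]) auto
  next
    case True
    have q0: "0 \<le> q" by (simp add: q_def)
    define A where "A = {p. 0 \<le> p \<and> p \<le> 1 \<and> fterm f q p + fterm f (1 - q) (1 - p) \<le> ereal eps}"
    define s where "s = Sup A"
    have sA: "s \<in> A" unfolding s_def A_def by (rule opt_exists[OF cv f1 q0 True e0])
    have bdd: "bdd_above A" unfolding A_def by (intro bdd_aboveI[of _ 1]) auto
    have s01: "0 \<le> s" "s \<le> 1" using sA by (auto simp: A_def)
    have qx: "pmf nuhat x < 1" using True q_def by simp
    define nustar where "nustar = nup nuhat x s"
    have sub: "insert x (set_pmf nuhat) \<subseteq> X" using hatX xX by simp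
    have setS: "set_pmf nustar \<subseteq> insert x (set_pmf nuhat)"
      unfolding nustar_def by (rule nup_set[OF qx])
    have "fdiv f X nuhat nustar = fterm f q s + fterm f (1 - q) (1 - s)"
      unfolding nustar_def q_def by (rule fdiv_nup[OF fin sub qx s01])
    then have inB: "nustar \<in> fball f X nuhat eps"
      unfolding fball_def using sA setS sub by (auto simp: A_def)
    have px: "pmf nustar x = s" unfolding nustar_def using nup_pmf[OF qx s01, of x] by simp
    have le: "pmf nu x \<le> s" if "nu \<in> fball f X nuhat eps" for nu
    proof -
      have nuX: "set_pmf nu \<subseteq> X" and D: "fdiv f X nuhat nu \<le> ereal eps"
        using that by (auto simp: fball_def)
      have "fterm f q (pmf nu x) + fterm f (1 - q) (1 - pmf nu x) \<le> fdiv f X nuhat nu"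
        unfolding q_def by (rule fdiv_lower[OF cv _ _ _ sub nuX]) (use fin in auto)
      then have "pmf nu x \<in> A" using D pmf_le_1[of nu x] unfolding A_def by auto
      then show ?thesis unfolding s_def by (rule cSup_upper[OF _ bdd])
    qed
    have sup: "(SUP nu\<in>fball f X nuhat eps. pmf nu x) = pmf nustar x"
      by (rule cSup_eq_maximum) (use inB px le in auto)
    have "card (set_pmf nustar) \<le> card (insert x (set_pmf nuhat))"
      by (rule card_mono) (use fin setS in auto)
    also have "\<dots> \<le> card (set_pmf nuhat) + 1" using card_insert_if[OF fin, of x] by simp
    finally show ?thesis using inB sup setS by (intro exI[of _ nustar]) auto
  qed
qed

end
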